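(* Let $f$ be analytic on $\mathcal{P}=\{z\in\mathbb{C}^n:|z-x_0|<\rho_0\}$, $x_0\in\mathbb{R}^n$, real-valued on real points, with $M(k)=\max_{|\alpha|=k}\sup_{\mathcal{P}}|\partial^\alpha f|$ and $\mu_{x_0}=\|\nabla f(x_0)\|>0$; let $E_0=f(x_0)$. With $c(n)$ a sufficiently small constant, let $\rho_1\le c(n)\min(\rho_0,\mu_{x_0}M(2)^{-1})$ and $r=c(n)\rho_1$, and let $g(y):=g(y,E_0)$ where, for $y\in\mathbb{R}^{n-1}$ with $|y|<r$, $g(y,E_0)$ is the unique $\xi$ with $|\xi|<\rho_1$ satisfying $f(\varphi(\xi,y;x_0))=E_0$. Let $h\in\mathbb{R}^n$ with $|h|<\rho_0/2$, $x_1=x_0+h$, $\mu_{x_1}=\|\nabla f(x_1)\|$, and assume $$\langle\nabla f(x_1),\nabla f(x_0)\rangle^2\le(1-\delta_0^2)\|\nabla f(x_1)\|^2\|\nabla f(x_0)\|^2,\qquad0<\delta_0\le1.$$ Let $\rho\le c(n)\min(r,\mu M(2)^{-1}\delta_0^2)$, with $\mu=\min(\mu_{x_0},\mu_{x_1})$. Then there exist $y\in\mathbb{R}^{n-1}$ with $\|y\|\le\rho$ and $x_0'=\varphi(g(y),y;x_0)$ with $\|x_0'-x_0\|\le2\rho$ such that $$|f(x_0'+h)-f(x_0+h)|\ge\tfrac12\mu_{x_1}\delta_0^2\rho.$$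
   Context: $|\cdot|$ is the sup-norm and $\|\cdot\|$ the Euclidean norm. Normal coordinates: $\mathfrak{n}_{x_0}=\mu_{x_0}^{-1}\nabla f(x_0)$, $\mathfrak{e}_{x_0,1},\dots,\mathfrak{e}_{x_0,n-1}$ an orthonormal basis of $\{\mathfrak{n}_{x_0}\}^\perp\subset\mathbb{R}^n$, and $\varphi(\xi,y;x_0)=x_0+\xi\mathfrak{n}_{x_0}+\sum_jy_j\mathfrak{e}_{x_0,j}$. (For such $\rho_1,r$ the solution $g(y,E_0)$ exists, is unique and analytic.) *)

theory Defs
  imports "HOL-Analysis.Analysis"
begin

definition supn :: "('a::real_normed_vector)^'n \<Rightarrow> real" where
  "supn x = Max (range (\<lambda>i. norm (x $ i)))"

definition cvec :: "real^'n \<Rightarrow> complex^'n" where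
  "cvec x = (\<chi> i. complex_of_real (x $ i))"

definition analytic_cn :: "(complex^'n \<Rightarrow> complex) \<Rightarrow> (complex^'n) set \<Rightarrow> bool" where
  "analytic_cn f S \<longleftrightarrow> (\<forall>z\<in>S. \<exists>e>0. \<exists>a :: ('n \<Rightarrow> nat) \<Rightarrow> complex.
      \<forall>w. supn (w - z) < e \<longrightarrow>
        ((\<lambda>\<alpha>. a \<alpha> * (\<Prod>i\<in>UNIV. (w $ i - z $ i) ^ (\<alpha> i))) has_sum f w) UNIV)"

definition cpd :: "'n \<Rightarrow> (complex^'n \<Rightarrow> complex) \<Rightarrow> complex^'n \<Rightarrow> complex" where
  "cpd i f z = deriv (\<lambda>t. f (z + axis i t)) 0"

fun cpds :: "'n list \<Rightarrow> (complex^'n \<Rightarrow> complex) \<Rightarrow> complex^'n \<Rightarrow> complex" where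
  "cpds [] f = f"
| "cpds (i # is) f = cpd i (cpds is f)"

definition freal :: "(complex^'n \<Rightarrow> complex) \<Rightarrow> real^'n \<Rightarrow> real" where
  "freal f x = Re (f (cvec x))"

definition rgrad :: "(complex^'n \<Rightarrow> complex) \<Rightarrow> real^'n \<Rightarrow> real^'n" where
  "rgrad f x = (\<chi> i. deriv (\<lambda>t::real. freal f (x + axis i t)) 0)"

text \<open>Normal coordinates: b is an orthonormal basis of R^n with b i0 = normal vector;
  y ranges over vectors with y $ i0 = 0 (identified with R^(n-1)).\<close>
definition phi :: "('n \<Rightarrow> real^'n) \<Rightarrow> 'n \<Rightarrow> real \<Rightarrow> real^'n \<Rightarrow> real^'n \<Rightarrow> real^'n" where
  "phi b i0 \<xi> y x0 = x0 + \<xi> *\<^sub>R b i0 + (\<Sum>j\<in>UNIV - {i0}. (y $ j) *\<^sub>R b j)"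

end

theory Submission
  imports Defs "HOL-Complex_Analysis.Cauchy_Integral_Formula"
begin

lemma supn_ge: "norm (x $ i) \<le> supn x"
  unfolding supn_def by (rule Max_ge) auto

lemma supn_lt: "supn x < e \<longleftrightarrow> (\<forall>i. norm (x $ i) < e)"
  unfolding supn_def by (subst Max_less_iff) auto

lemma supn_le: "supn x \<le> e \<longleftrightarrow> (\<forall>i. norm (x $ i) \<le> e)"
  unfolding supn_def by (subst Max_le_iff) auto

lemma supn_le_norm: "supn (x::real^'n) \<le> norm x"
  unfolding supn_le by (simp add: component_le_norm_cart)

lemma supn_triangle: "supn (x + y) \<le> supn x + supn y"
  unfolding supn_le by (metis add_mono norm_triangle_le supn_ge vector_add_component)

lemma supn_axis: "supn (axis j (u::'a::real_normed_vector)) = norm u"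
proof -
  have "supn (axis j u) \<le> norm u" unfolding supn_le by (simp add: axis_def)
  moreover have "norm u \<le> supn (axis j u)" using supn_ge[of "axis j u" j] by (simp add: axis_def)
  ultimately show ?thesis by simp
qed

lemma axis_add': "axis j ((a::complex) + b) = axis j a + axis j b"
  by (auto simp: vec_eq_iff axis_def)

lemma axis_zero0 [simp]: "axis j (0::'a::zero) = 0"
  by (simp add: vec_eq_iff axis_def)

lemma cvec_add: "cvec (x + y) = cvec x + cvec y"
  by (simp add: cvec_def vec_eq_iff)
lemma cvec_diff: "cvec (x - y) = cvec x - cvec y"
  by (simp add: cvec_def vec_eq_iff)
lemma cvec_axis: "cvec (axis j t) = axis j (complex_of_real t)"
  by (simp add: cvec_def vec_eq_iff axis_def)
lemma supn_cvec: "supn (cvec x) = supn x"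
  unfolding supn_def cvec_def by simp

lemma box_open:
  assumes "supn (z - cc) < R" "supn (w - z) < R - supn (z - cc)"
  shows "supn (w - cc) < R"
  using supn_triangle[of "w - z" "z - cc"] assms by simp

lemma prod_axis:
  "(\<Prod>i\<in>UNIV. ((axis j (u::complex)) $ i) ^ (\<alpha> i)) =
     (if \<forall>i. i \<noteq> j \<longrightarrow> \<alpha> i = 0 then u ^ (\<alpha> j) else 0)"
proof (cases "\<forall>i. i \<noteq> j \<longrightarrow> \<alpha> i = 0")
  case True
  have "(\<Prod>i\<in>UNIV. ((axis j u) $ i) ^ (\<alpha> i)) = (\<Prod>i\<in>{j}. ((axis j u) $ i) ^ (\<alpha> i))"
    by (rule prod.mono_neutral_right) (auto simp: True axis_def)
  then show ?thesis using True by (simp add: axis_def)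
next
  case False
  then obtain i where "i \<noteq> j" "\<alpha> i \<noteq> 0" by auto
  then have z: "(\<Prod>i\<in>UNIV. ((axis j u) $ i) ^ (\<alpha> i)) = 0"
    by (subst prod_zero_iff) (auto simp: axis_def intro!: bexI[of _ i])
  show ?thesis unfolding if_not_P[OF False] by (rule z)
qed

lemma prod_axis2:
  assumes "i \<noteq> j"
  shows "(\<Prod>m\<in>UNIV. ((axis j (u::complex) + axis i t) $ m) ^ (\<alpha> m)) =
     (if \<forall>m. m \<noteq> j \<and> m \<noteq> i \<longrightarrow> \<alpha> m = 0 then u ^ (\<alpha> j) * t ^ (\<alpha> i) else 0)"
proof (cases "\<forall>m. m \<noteq> j \<and> m \<noteq> i \<longrightarrow> \<alpha> m = 0")
  case True
  have "(\<Prod>m\<in>UNIV. ((axis j u + axis i t) $ m) ^ (\<alpha> m)) = (\<Prod>m\<in>{j,i}. ((axis j u + axis i t) $ m) ^ (\<alpha> m))"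
    by (rule prod.mono_neutral_right) (auto simp: True axis_def)
  then show ?thesis using True assms by (simp add: axis_def)
next
  case False
  then obtain m where "m \<noteq> j" "m \<noteq> i" "\<alpha> m \<noteq> 0" by auto
  then have z: "(\<Prod>m\<in>UNIV. ((axis j u + axis i t) $ m) ^ (\<alpha> m)) = 0"
    by (subst prod_zero_iff) (auto simp: axis_def intro!: bexI[of _ m])
  show ?thesis unfolding if_not_P[OF False] by (rule z)
qed

lemma slice_series1:
  fixes f :: "complex^'n \<Rightarrow> complex" and j :: 'n
  assumes an: "analytic_cn f P" and zP: "z \<in> P"
  obtains e c where "e > 0" "\<forall>u. norm u < e \<longrightarrow> (\<lambda>k. c k * u ^ k) sums f (z + axis j u)"
proof -
  from an zP obtain e and a :: "('n \<Rightarrow> nat) \<Rightarrow> complex" where e: "e > 0" and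
    hs: "\<forall>w. supn (w - z) < e \<longrightarrow>
        ((\<lambda>\<alpha>. a \<alpha> * (\<Prod>i\<in>UNIV. (w $ i - z $ i) ^ (\<alpha> i))) has_sum f w) UNIV"
    unfolding analytic_cn_def by blast
  define emb where "emb = (\<lambda>k::nat. (\<lambda>i. if i = j then k else 0))"
  have inj: "inj emb" unfolding emb_def by (auto simp: inj_on_def fun_eq_iff)
  have S: "(\<lambda>k. a (emb k) * u ^ k) sums f (z + axis j u)" if u: "norm u < e" for u
  proof -
    have "supn (z + axis j u - z) < e" using u by (simp add: supn_axis)
    then have h1: "((\<lambda>\<alpha>. a \<alpha> * (\<Prod>i\<in>UNIV. ((axis j u) $ i) ^ (\<alpha> i))) has_sum f (z + axis j u)) UNIV"
      using hs[rule_format, of "z + axis j u"] by simp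
    let ?T = "\<lambda>\<alpha>. a \<alpha> * (\<Prod>i\<in>UNIV. ((axis j u) $ i) ^ (\<alpha> i))"
    have nz: "\<alpha> \<in> range emb" if "\<forall>i. i \<noteq> j \<longrightarrow> \<alpha> i = 0" for \<alpha>
      using that unfolding emb_def by (intro image_eqI[of _ _ "\<alpha> j"]) (auto simp: fun_eq_iff)
    have z0: "?T x = 0" if "x \<in> UNIV - range emb" for x
    proof -
      have "\<not> (\<forall>i. i \<noteq> j \<longrightarrow> x i = 0)" using that nz by blast
      then show ?thesis by (simp only: prod_axis if_False mult_zero_right)
    qed
    have h2: "(?T has_sum f (z + axis j u)) (range emb)"
      by (rule has_sum_cong_neutral[where S=UNIV and T="range emb" and f="?T" and g="?T", THEN iffD1, OF _ _ _ h1])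
        (use z0 in auto)
    have "((?T \<circ> emb) has_sum f (z + axis j u)) UNIV"
      using h2 has_sum_reindex[OF inj] by blast
    moreover have "(?T \<circ> emb) = (\<lambda>k. a (emb k) * u ^ k)"
    proof
      fix k
      have "\<forall>i. i \<noteq> j \<longrightarrow> emb k i = 0" "emb k j = k" by (auto simp: emb_def)
      then show "(?T \<circ> emb) k = a (emb k) * u ^ k" by (simp add: prod_axis)
    qed
    ultimately show ?thesis using has_sum_imp_sums by metis
  qed
  show ?thesis by (rule that[of e "\<lambda>k. a (emb k)"]) (use e S in auto)
qed

lemma slice_series2:
  fixes f :: "complex^'n \<Rightarrow> complex" and i j :: 'n
  assumes an: "analytic_cn f P" and zP: "z \<in> P" and ij: "i \<noteq> j"
  obtains e a2 where "e > 0" "\<forall>u t. norm u < e \<longrightarrow> norm t < e \<longrightarrow>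
     ((\<lambda>(l,k). a2 (l,k) * (u ^ k * t ^ l)) has_sum f (z + axis j u + axis i t)) UNIV"
proof -
  from an zP obtain e and a :: "('n \<Rightarrow> nat) \<Rightarrow> complex" where e: "e > 0" and
    hs: "\<forall>w. supn (w - z) < e \<longrightarrow>
        ((\<lambda>\<alpha>. a \<alpha> * (\<Prod>i\<in>UNIV. (w $ i - z $ i) ^ (\<alpha> i))) has_sum f w) UNIV"
    unfolding analytic_cn_def by blast
  define emb where "emb = (\<lambda>(l::nat,k::nat). (\<lambda>m. if m = j then k else if m = i then l else 0))"
  have inj: "inj emb" unfolding emb_def using ij by (auto simp: inj_on_def fun_eq_iff)
  have S: "((\<lambda>(l,k). a (emb (l,k)) * (u ^ k * t ^ l)) has_sum f (z + axis j u + axis i t)) UNIV"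
    if u: "norm u < e" and t: "norm t < e" for u t
  proof -
    have "supn (axis j u + axis i t) < e" unfolding supn_lt using u t e ij
      by (auto simp: axis_def)
    then have "supn (z + axis j u + axis i t - z) < e" by (simp add: algebra_simps)
    then have h1: "((\<lambda>\<alpha>. a \<alpha> * (\<Prod>m\<in>UNIV. ((axis j u + axis i t) $ m) ^ (\<alpha> m))) has_sum f (z + axis j u + axis i t)) UNIV"
      using hs[rule_format, of "z + axis j u + axis i t"] by (simp add: algebra_simps)
    let ?T = "\<lambda>\<alpha>. a \<alpha> * (\<Prod>m\<in>UNIV. ((axis j u + axis i t) $ m) ^ (\<alpha> m))"
    have nz: "\<alpha> \<in> range emb" if "\<forall>m. m \<noteq> j \<and> m \<noteq> i \<longrightarrow> \<alpha> m = 0" for \<alpha>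
      using that ij unfolding emb_def by (intro image_eqI[of _ _ "(\<alpha> i, \<alpha> j)"]) (auto simp: fun_eq_iff)
    have z0: "?T x = 0" if "x \<in> UNIV - range emb" for x
    proof -
      have "\<not> (\<forall>m. m \<noteq> j \<and> m \<noteq> i \<longrightarrow> x m = 0)" using that nz by blast
      then show ?thesis by (simp only: prod_axis2[OF ij] if_False mult_zero_right)
    qed
    have h2: "(?T has_sum f (z + axis j u + axis i t)) (range emb)"
      by (rule has_sum_cong_neutral[where S=UNIV and T="range emb" and f="?T" and g="?T", THEN iffD1, OF _ _ _ h1])
        (use z0 in auto)
    have "((?T \<circ> emb) has_sum f (z + axis j u + axis i t)) UNIV"
      using h2 has_sum_reindex[OF inj] by blast
    moreover have "(?T \<circ> emb) = (\<lambda>(l,k). a (emb (l,k)) * (u ^ k * t ^ l))"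
    proof
      fix p :: "nat \<times> nat"
      obtain l k where p: "p = (l,k)" by (cases p)
      have "\<forall>m. m \<noteq> j \<and> m \<noteq> i \<longrightarrow> emb (l,k) m = 0" "emb (l,k) j = k" "emb (l,k) i = l"
        using ij by (auto simp: emb_def)
      then show "(?T \<circ> emb) p = (\<lambda>(l,k). a (emb (l,k)) * (u ^ k * t ^ l)) p"
        unfolding p comp_def prod_axis2[OF ij] by simp
    qed
    ultimately show ?thesis by simp
  qed
  show ?thesis by (rule that[of e "\<lambda>p. a (emb p)"]) (use e S in auto)
qed

definition slicediff :: "(complex^'n \<Rightarrow> complex) \<Rightarrow> (complex^'n) set \<Rightarrow> bool" where
  "slicediff \<phi> P \<longleftrightarrow> (\<forall>z\<in>P. \<forall>j. (\<lambda>u. \<phi> (z + axis j u)) field_differentiable (at 0))"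

lemma slicediff_f:
  fixes f :: "complex^'n \<Rightarrow> complex"
  assumes an: "analytic_cn f P"
  shows "slicediff f P"
  unfolding slicediff_def
proof (intro ballI allI)
  fix z j assume zP: "z \<in> P"
  obtain e c where e: "e > 0" and S: "\<forall>u. norm u < e \<longrightarrow> (\<lambda>k. c k * u ^ k) sums f (z + axis j u)"
    using slice_series1[OF an zP, of j] by blast
  have sm: "summable (\<lambda>k. c k * u ^ k)" if "norm u < e" for u
    using S that sums_summable by blast
  have d: "((\<lambda>u. \<Sum>k. c k * u ^ k) has_field_derivative (\<Sum>k. diffs c k * 0 ^ k)) (at 0)"
    by (rule termdiffs_strong'[of e]) (use sm e in auto)
  have "((\<lambda>u. f (z + axis j u)) has_field_derivative (\<Sum>k. diffs c k * 0 ^ k)) (at 0)"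
  proof (rule has_field_derivative_transform_within_open[OF d, of "ball 0 e"])
    show "(\<Sum>k. c k * x ^ k) = f (z + axis j x)" if "x \<in> ball 0 e" for x
      using S that by (metis mem_ball_0 sums_unique)
  qed (use e in auto)
  then show "(\<lambda>u. f (z + axis j u)) field_differentiable (at 0)"
    unfolding field_differentiable_def by blast
qed

lemma slicediff_deriv:
  assumes sd: "slicediff \<phi> P" and zP: "z + axis j u \<in> P"
  shows "((\<lambda>s. \<phi> (z + axis j s)) has_field_derivative cpd j \<phi> (z + axis j u)) (at u)"
proof -
  let ?z = "z + axis j u"
  have "(\<lambda>t. \<phi> (?z + axis j t)) field_differentiable (at 0)"
    using sd zP unfolding slicediff_def by blast
  then have "((\<lambda>t. \<phi> (?z + axis j t)) has_field_derivative cpd j \<phi> ?z) (at 0)"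
    unfolding cpd_def by (simp add: DERIV_deriv_iff_field_differentiable)
  moreover have "(\<lambda>t. \<phi> (?z + axis j t)) = (\<lambda>t. \<phi> (z + axis j (t + u)))"
    by (simp add: axis_add' algebra_simps)
  ultimately have "((\<lambda>t. \<phi> (z + axis j (t + u))) has_field_derivative cpd j \<phi> ?z) (at 0)"
    by simp
  then show ?thesis using DERIV_shift[of "\<lambda>s. \<phi> (z + axis j s)" "cpd j \<phi> ?z" 0 u] by simp
qed

lemma slicediff_cpd_ne:
  fixes f :: "complex^'n \<Rightarrow> complex" and i j :: 'n
  assumes an: "analytic_cn f P" and zP: "z \<in> P" and ij: "i \<noteq> j"
  shows "(\<lambda>u. cpd i f (z + axis j u)) field_differentiable (at 0)"
proof -
  obtain e a2 where e: "e > 0" and H: "\<forall>u t. norm u < e \<longrightarrow> norm t < e \<longrightarrow>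
     ((\<lambda>(l,k). a2 (l,k) * (u ^ k * t ^ l)) has_sum f (z + axis j u + axis i t)) UNIV"
    using slice_series2[OF an zP ij] by blast
  define C where "C l u = (\<Sum>\<^sub>\<infinity>k. a2 (l,k) * u ^ k)" for l u
  have key: "(\<lambda>k. a2 (1,k) * u ^ k) sums cpd i f (z + axis j u)" if u: "norm u < e" for u
  proof -
    have inner: "(\<lambda>k. a2 (l,k) * (u ^ k * t ^ l)) summable_on UNIV" if t: "norm t < e" for t l
    proof -
      have "(\<lambda>(l,k). a2 (l,k) * (u ^ k * t ^ l)) summable_on UNIV"
        using H u t by (auto simp: summable_on_def)
      then have "(\<lambda>(l,k). a2 (l,k) * (u ^ k * t ^ l)) summable_on (Pair l ` UNIV)"
        by (rule summable_on_subset_banach) auto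
      then show ?thesis by (subst (asm) summable_on_reindex) (auto simp: inj_on_def comp_def)
    qed
    define t0 where "t0 = complex_of_real (e/2)"
    have t0: "norm t0 < e" "t0 \<noteq> 0" using e by (auto simp: t0_def)
    have sC: "(\<lambda>k. a2 (l,k) * u ^ k) summable_on UNIV" for l
    proof -
      have "(\<lambda>k. a2 (l,k) * u ^ k * t0 ^ l) summable_on UNIV"
        using inner[OF t0(1), of l] by (simp add: mult.assoc)
      then show ?thesis using summable_on_cmult_left'[of "t0 ^ l" "\<lambda>k. a2 (l,k) * u ^ k" UNIV] t0(2) by simp
    qed
    have ser: "(\<lambda>l. C l u * t ^ l) sums f (z + axis j u + axis i t)" if t: "norm t < e" for t
    proof -
      have hs: "((\<lambda>(l,k). a2 (l,k) * (u ^ k * t ^ l)) has_sum f (z + axis j u + axis i t)) UNIV"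
        using H u t by blast
      have sm: "(\<lambda>(l,k). a2 (l,k) * (u ^ k * t ^ l)) summable_on Sigma UNIV (\<lambda>_. UNIV)"
        using hs by (auto simp: summable_on_def)
      have inn: "(\<Sum>\<^sub>\<infinity>k. a2 (l,k) * (u ^ k * t ^ l)) = C l u * t ^ l" for l
        unfolding C_def using infsum_cmult_left'[of "\<lambda>k. a2 (l,k) * u ^ k" "t ^ l" UNIV]
        by (simp add: mult.assoc)
      have "(\<Sum>\<^sub>\<infinity>l. \<Sum>\<^sub>\<infinity>k. a2 (l,k) * (u ^ k * t ^ l)) =
            (\<Sum>\<^sub>\<infinity>(l,k)\<in>Sigma UNIV (\<lambda>_. UNIV). a2 (l,k) * (u ^ k * t ^ l))"
        by (rule infsum_Sigma'_banach[OF sm])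
      also have "\<dots> = f (z + axis j u + axis i t)" using hs infsumI by simp
      finally have e1: "(\<Sum>\<^sub>\<infinity>l. C l u * t ^ l) = f (z + axis j u + axis i t)"
        using inn by simp
      have "(\<lambda>l. \<Sum>\<^sub>\<infinity>k. a2 (l,k) * (u ^ k * t ^ l)) summable_on UNIV"
        using summable_on_Sigma_banach[OF sm] by simp
      then have "(\<lambda>l. C l u * t ^ l) summable_on UNIV" using inn by simp
      then have "((\<lambda>l. C l u * t ^ l) has_sum f (z + axis j u + axis i t)) UNIV"
        using e1 summable_iff_has_sum_infsum by metis
      then show ?thesis by (rule has_sum_imp_sums)
    qed
    have smt: "summable (\<lambda>l. C l u * t ^ l)" if "norm t < e" for t
      using ser[OF that] sums_summable by blast
    have d: "((\<lambda>t. \<Sum>l. C l u * t ^ l) has_field_derivative (\<Sum>l. diffs (\<lambda>l. C l u) l * 0 ^ l)) (at 0)"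
      by (rule termdiffs_strong'[of e]) (use smt e in auto)
    have d0: "(\<Sum>l. diffs (\<lambda>l. C l u) l * 0 ^ l) = C 1 u"
      by (simp add: powser_zero diffs_def)
    have "((\<lambda>t. f (z + axis j u + axis i t)) has_field_derivative C 1 u) (at 0)"
    proof (rule has_field_derivative_transform_within_open[OF d[unfolded d0], of "ball 0 e"])
      show "(\<Sum>l. C l u * x ^ l) = f (z + axis j u + axis i x)" if "x \<in> ball 0 e" for x
        using ser that by (metis mem_ball_0 sums_unique)
    qed (use e in auto)
    then have "cpd i f (z + axis j u) = C 1 u"
      unfolding cpd_def by (rule DERIV_imp_deriv)
    moreover have "((\<lambda>k. a2 (1,k) * u ^ k) has_sum C 1 u) UNIV"
      using sC[of 1] unfolding C_def by (simp add: summable_iff_has_sum_infsum)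
    ultimately show ?thesis using has_sum_imp_sums by metis
  qed
  have sm: "summable (\<lambda>k. a2 (1,k) * u ^ k)" if "norm u < e" for u
    using key[OF that] sums_summable by blast
  have d: "((\<lambda>u. \<Sum>k. a2 (1,k) * u ^ k) has_field_derivative (\<Sum>k. diffs (\<lambda>k. a2 (1,k)) k * 0 ^ k)) (at 0)"
    by (rule termdiffs_strong'[of e]) (use sm e in auto)
  have "((\<lambda>u. cpd i f (z + axis j u)) has_field_derivative (\<Sum>k. diffs (\<lambda>k. a2 (1,k)) k * 0 ^ k)) (at 0)"
  proof (rule has_field_derivative_transform_within_open[OF d, of "ball 0 e"])
    show "(\<Sum>k. a2 (1,k) * x ^ k) = cpd i f (z + axis j x)" if "x \<in> ball 0 e" for x
      using key that by (metis mem_ball_0 sums_unique)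
  qed (use e in auto)
  then show ?thesis unfolding field_differentiable_def by blast
qed

lemma slicediff_cpd:
  fixes f :: "complex^'n \<Rightarrow> complex"
  assumes an: "analytic_cn f P" and P: "P = {z. supn (z - cc) < R}"
  shows "slicediff (cpd i f) P"
  unfolding slicediff_def
proof (intro ballI allI)
  fix z j assume zP: "z \<in> P"
  show "(\<lambda>u. cpd i f (z + axis j u)) field_differentiable (at 0)"
  proof (cases "i = j")
    case False
    then show ?thesis using slicediff_cpd_ne[OF an zP] by blast
  next
    case True
    define \<epsilon> where "\<epsilon> = R - supn (z - cc)"
    have \<epsilon>: "\<epsilon> > 0" using zP P by (auto simp: \<epsilon>_def)
    have inP: "z + axis j u \<in> P" if "u \<in> ball 0 \<epsilon>" for u
      using that zP P box_open[of z cc R "z + axis j u"] by (auto simp: \<epsilon>_def supn_axis)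
    have sd: "slicediff f P" by (rule slicediff_f[OF an])
    have dd: "((\<lambda>s. f (z + axis j s)) has_field_derivative cpd j f (z + axis j u)) (at u)"
      if "u \<in> ball 0 \<epsilon>" for u
      using slicediff_deriv[OF sd inP[OF that]] .
    have hol: "(\<lambda>s. f (z + axis j s)) holomorphic_on ball 0 \<epsilon>"
      unfolding holomorphic_on_open[OF open_ball] field_differentiable_def using dd by blast
    have hol': "deriv (\<lambda>s. f (z + axis j s)) holomorphic_on ball 0 \<epsilon>"
      by (rule holomorphic_deriv[OF hol]) auto
    then have "deriv (\<lambda>s. f (z + axis j s)) field_differentiable (at 0)"
      using \<epsilon> holomorphic_on_imp_differentiable_at[OF hol' open_ball, of 0] by simp
    then obtain D where D: "(deriv (\<lambda>s. f (z + axis j s)) has_field_derivative D) (at 0)"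
      unfolding field_differentiable_def by blast
    have "((\<lambda>u. cpd i f (z + axis j u)) has_field_derivative D) (at 0)"
    proof (rule has_field_derivative_transform_within_open[OF D, of "ball 0 \<epsilon>"])
      show "deriv (\<lambda>s. f (z + axis j s)) x = cpd i f (z + axis j x)" if "x \<in> ball 0 \<epsilon>" for x
        using DERIV_imp_deriv[OF dd[OF that]] True by simp
    qed (use \<epsilon> in auto)
    then show ?thesis unfolding field_differentiable_def by blast
  qed
qed

lemma slicediff_real:
  fixes \<phi> :: "complex^'n \<Rightarrow> complex"
  assumes sd: "slicediff \<phi> P" and inP: "cvec (p + axis j t) \<in> P"
  shows "((\<lambda>s. Re (\<phi> (cvec (p + axis j s)))) has_real_derivative Re (cpd j \<phi> (cvec (p + axis j t)))) (at t)"
proof -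
  have eq: "cvec (p + axis j s) = cvec p + axis j (complex_of_real s)" for s
    by (simp add: cvec_add cvec_axis)
  have "((\<lambda>u. \<phi> (cvec p + axis j u)) has_field_derivative cpd j \<phi> (cvec p + axis j (complex_of_real t))) (at (complex_of_real t))"
    by (rule slicediff_deriv[OF sd]) (use inP eq in simp)
  then have "((\<lambda>s. \<phi> (cvec p + axis j (complex_of_real s))) has_vector_derivative cpd j \<phi> (cvec p + axis j (complex_of_real t))) (at t)"
    using has_vector_derivative_real_field by blast
  then have "((\<lambda>s. Re (\<phi> (cvec p + axis j (complex_of_real s)))) has_real_derivative Re (cpd j \<phi> (cvec p + axis j (complex_of_real t)))) (at t)"
    by (rule has_field_derivative_Re)
  then show ?thesis unfolding eq .
qed

lemma axisbound:
  fixes H H' :: "real \<Rightarrow> real"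
  assumes "\<And>s. s \<in> closed_segment 0 t \<Longrightarrow> (H has_real_derivative H' s) (at s)"
    and "\<And>s. s \<in> closed_segment 0 t \<Longrightarrow> \<bar>H' s\<bar> \<le> L"
  shows "\<bar>H t - H 0\<bar> \<le> L * \<bar>t\<bar>"
proof -
  have "norm (H t - H 0) \<le> L * norm (t - 0)"
    by (rule field_differentiable_bound[of "closed_segment 0 t" H H'])
      (use assms in \<open>auto intro: has_field_derivative_at_within\<close>)
  then show ?thesis by simp
qed

definition mix :: "real^'n \<Rightarrow> real^'n \<Rightarrow> 'n set \<Rightarrow> real^'n" where
  "mix p q S = (\<chi> i. if i \<in> S then q $ i else p $ i)"

lemma mix_insert: "j \<notin> S \<Longrightarrow> mix p q (insert j S) = mix p q S + axis j (q $ j - p $ j)"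
  by (auto simp: mix_def vec_eq_iff axis_def)

lemma stair:
  fixes Q :: "real^'n \<Rightarrow> real" and a e :: "'n \<Rightarrow> real"
  assumes "\<And>S j. j \<notin> S \<Longrightarrow> \<bar>Q (mix p q (insert j S)) - Q (mix p q S) - a j\<bar> \<le> e j"
  shows "\<bar>Q q - Q p - (\<Sum>j\<in>UNIV. a j)\<bar> \<le> (\<Sum>j\<in>UNIV. e j)"
proof -
  have "\<bar>Q (mix p q S) - Q p - (\<Sum>j\<in>S. a j)\<bar> \<le> (\<Sum>j\<in>S. e j)" if "finite S" for S
    using that
  proof (induction S rule: finite_induct)
    case empty
    then show ?case by (simp add: mix_def)
  next
    case (insert x F)
    have "\<bar>Q (mix p q (insert x F)) - Q p - (\<Sum>j\<in>insert x F. a j)\<bar> =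
       \<bar>(Q (mix p q (insert x F)) - Q (mix p q F) - a x) + (Q (mix p q F) - Q p - (\<Sum>j\<in>F. a j))\<bar>"
      using insert by simp
    also have "\<dots> \<le> e x + (\<Sum>j\<in>F. e j)"
      using assms[OF insert(2)] insert(3) by linarith
    finally show ?case using insert by simp
  qed
  from this[of UNIV] show ?thesis by (simp add: mix_def)
qed

lemma segment_coord:
  fixes s d a :: real
  assumes "s \<in> closed_segment 0 d" "\<bar>a\<bar> < R" "\<bar>a + d\<bar> < R"
  shows "\<bar>a + s\<bar> < R" "\<bar>s\<bar> \<le> \<bar>d\<bar>"
  using assms by (auto simp: closed_segment_eq_real_ivl split: if_splits)

lemma stair_point:
  fixes p q x0 :: "real^'n"
  assumes p: "supn (p - x0) < R" and q: "supn (q - x0) < R" and jS: "j \<notin> S"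
    and s: "s \<in> closed_segment 0 (q $ j - p $ j)"
  shows "supn (mix p q S + axis j s - x0) < R" "norm (mix p q S + axis j s - p) \<le> norm (q - p)"
proof -
  have pi: "\<bar>p $ i - x0 $ i\<bar> < R" and qi: "\<bar>q $ i - x0 $ i\<bar> < R" for i
    using p q unfolding supn_lt by auto
  have sj: "\<bar>(p $ j - x0 $ j) + s\<bar> < R" "\<bar>s\<bar> \<le> \<bar>q $ j - p $ j\<bar>"
    using segment_coord[OF s, of "p $ j - x0 $ j" R] pi[of j] qi[of j] by auto
  show "supn (mix p q S + axis j s - x0) < R"
    unfolding supn_lt
  proof
    fix i
    show "norm ((mix p q S + axis j s - x0) $ i) < R"
      using pi[of i] qi[of i] sj jS by (auto simp: mix_def axis_def algebra_simps)
  qed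
  show "norm (mix p q S + axis j s - p) \<le> norm (q - p)"
  proof (rule norm_le_componentwise_cart)
    fix i
    show "norm ((mix p q S + axis j s - p) $ i) \<le> norm ((q - p) $ i)"
      using sj jS by (auto simp: mix_def axis_def)
  qed
qed

lemma sum_abs_le_card_norm:
  fixes v :: "real^'n"
  shows "(\<Sum>j\<in>UNIV. \<bar>v $ j\<bar>) \<le> real CARD('n) * norm v"
proof -
  have "(\<Sum>j\<in>UNIV. \<bar>v $ j\<bar>) \<le> (\<Sum>j\<in>(UNIV::'n set). norm v)"
    by (rule sum_mono) (simp add: component_le_norm_cart)
  then show ?thesis by simp
qed

lemma onb_expand:
  fixes b :: "'n \<Rightarrow> real^'n"
  assumes orth: "\<forall>i j. b i \<bullet> b j = (if i = j then 1 else 0)"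
  shows "(\<Sum>j\<in>UNIV. (w \<bullet> b j) *\<^sub>R b j) = w"
proof (rule ccontr)
  define r where "r = w - (\<Sum>j\<in>UNIV. (w \<bullet> b j) *\<^sub>R b j)"
  assume "(\<Sum>j\<in>UNIV. (w \<bullet> b j) *\<^sub>R b j) \<noteq> w"
  then have r0: "r \<noteq> 0" unfolding r_def by simp
  have rb: "r \<bullet> b k = 0" for k
  proof -
    have "(\<Sum>j\<in>UNIV. (w \<bullet> b j) *\<^sub>R b j) \<bullet> b k = (\<Sum>j\<in>UNIV. (w \<bullet> b j) * (b j \<bullet> b k))"
      by (simp add: inner_sum_left)
    also have "\<dots> = (\<Sum>j\<in>UNIV. if j = k then w \<bullet> b k else 0)"
      using orth by (intro sum.cong) auto
    also have "\<dots> = w \<bullet> b k" by simp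
    finally show ?thesis unfolding r_def by (simp add: inner_diff_left)
  qed
  have inj: "inj b"
  proof
    fix i j assume "b i = b j"
    then have "b i \<bullet> b j = 1" using orth by metis
    then show "i = j" using orth by (metis zero_neq_one)
  qed
  have rnb: "r \<notin> range b"
  proof
    assume "r \<in> range b"
    then obtain k where "r = b k" by auto
    then have "r \<bullet> r = 1" using orth by simp
    then show False using rb \<open>r = b k\<close> by simp
  qed
  let ?S = "insert r (range b)"
  have "pairwise orthogonal ?S"
    unfolding pairwise_def orthogonal_def
    using orth rb inner_commute by (auto simp: inner_commute)
  moreover have "0 \<notin> ?S" using r0 orth by (auto) (metis inner_zero_left zero_neq_one)
  ultimately have "independent ?S" by (rule pairwise_orthogonal_independent)
  then have "card ?S \<le> DIM(real^'n)" using independent_bound by blast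
  moreover have "card ?S = CARD('n) + 1"
    using rnb card_image[OF inj] by simp
  ultimately show False by simp
qed

locale rs =
  fixes f :: "complex^'n \<Rightarrow> complex" and x0 :: "real^'n" and R M2 :: real
  assumes an: "analytic_cn f {z. supn (z - cvec x0) < R}"
    and M2: "\<forall>is z. length is = 2 \<and> z \<in> {z. supn (z - cvec x0) < R} \<longrightarrow> norm (cpds is f z) \<le> M2"
begin

definition Gr :: "real^'n \<Rightarrow> real^'n" where
  "Gr p = (\<chi> i. Re (cpd i f (cvec p)))"

lemma inP: "cvec x \<in> {z. supn (z - cvec x0) < R} \<longleftrightarrow> supn (x - x0) < R"
  by (simp add: cvec_diff[symmetric] supn_cvec)

lemma sdf: "slicediff f {z. supn (z - cvec x0) < R}"
  by (rule slicediff_f[OF an])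

lemma sdc: "slicediff (cpd i f) {z. supn (z - cvec x0) < R}"
  by (rule slicediff_cpd[OF an refl])

lemma F_deriv:
  assumes "supn (p + axis j t - x0) < R"
  shows "((\<lambda>s. freal f (p + axis j s)) has_real_derivative Gr (p + axis j t) $ j) (at t)"
  using slicediff_real[OF sdf, of p j t] assms inP unfolding freal_def Gr_def by simp

lemma rgrad_eq:
  assumes "supn (p - x0) < R"
  shows "rgrad f p = Gr p"
proof -
  have "deriv (\<lambda>t. freal f (p + axis j t)) 0 = Gr p $ j" for j
  proof -
    have e0: "axis j (0::real) = 0" by (simp add: vec_eq_iff axis_def)
    show ?thesis using DERIV_imp_deriv[OF F_deriv[of p j 0]] assms by (simp add: e0)
  qed
  then show ?thesis unfolding rgrad_def by (simp add: vec_eq_iff)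
qed

lemma lipG_comp:
  assumes p: "supn (p - x0) < R" and q: "supn (q - x0) < R"
  shows "\<bar>Gr q $ i - Gr p $ i\<bar> \<le> M2 * (\<Sum>j\<in>UNIV. \<bar>q $ j - p $ j\<bar>)"
proof -
  have step: "\<bar>Gr (mix p q (insert j S)) $ i - Gr (mix p q S) $ i - 0\<bar> \<le> M2 * \<bar>q $ j - p $ j\<bar>"
    if jS: "j \<notin> S" for S j
  proof -
    let ?m = "mix p q S"
    let ?H = "\<lambda>s. Re (cpd i f (cvec (?m + axis j s)))"
    have "\<bar>?H (q $ j - p $ j) - ?H 0\<bar> \<le> M2 * \<bar>q $ j - p $ j\<bar>"
    proof (rule axisbound)
      fix s assume s: "s \<in> closed_segment 0 (q $ j - p $ j)"
      have inB: "cvec (?m + axis j s) \<in> {z. supn (z - cvec x0) < R}"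
        using stair_point[OF p q jS s] inP by simp
      show "(?H has_real_derivative Re (cpd j (cpd i f) (cvec (?m + axis j s)))) (at s)"
        by (rule slicediff_real[OF sdc inB])
      have "norm (cpds [j, i] f (cvec (?m + axis j s))) \<le> M2"
        using M2[rule_format, of "[j,i]"] inB by auto
      then show "\<bar>Re (cpd j (cpd i f) (cvec (?m + axis j s)))\<bar> \<le> M2"
        using abs_Re_le_cmod[of "cpd j (cpd i f) (cvec (?m + axis j s))"] by simp
    qed
    then show ?thesis
      by (simp add: mix_insert[OF jS] Gr_def)
  qed
  from stair[of "\<lambda>x. Gr x $ i" p q "\<lambda>_. 0" "\<lambda>j. M2 * \<bar>q $ j - p $ j\<bar>", OF step]
  show ?thesis by (simp add: sum_distrib_left)
qed

lemma lipG:
  assumes p: "supn (p - x0) < R" and q: "supn (q - x0) < R"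
  shows "norm (Gr q - Gr p) \<le> real CARD('n) ^ 2 * M2 * norm (q - p)"
proof -
  have M0: "M2 \<ge> 0"
    using M2 p inP[of p] norm_ge_zero order_trans by (metis (no_types, lifting) length_replicate mem_Collect_eq)
  have c: "\<bar>(Gr q - Gr p) $ i\<bar> \<le> M2 * (real CARD('n) * norm (q - p))" for i
  proof -
    have "\<bar>(Gr q - Gr p) $ i\<bar> \<le> M2 * (\<Sum>j\<in>UNIV. \<bar>(q - p) $ j\<bar>)"
      using lipG_comp[OF p q, of i] by simp
    also have "\<dots> \<le> M2 * (real CARD('n) * norm (q - p))"
      by (rule mult_left_mono[OF sum_abs_le_card_norm M0])
    finally show ?thesis .
  qed
  have "norm (Gr q - Gr p) \<le> (\<Sum>i\<in>UNIV. \<bar>(Gr q - Gr p) $ i\<bar>)" by (rule norm_le_l1_cart)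
  also have "\<dots> \<le> (\<Sum>i\<in>(UNIV::'n set). M2 * (real CARD('n) * norm (q - p)))"
    by (rule sum_mono[OF c])
  also have "\<dots> = real CARD('n) ^ 2 * M2 * norm (q - p)" by (simp add: power2_eq_square)
  finally show ?thesis .
qed

lemma M2_nonneg: "supn (p - x0) < R \<Longrightarrow> M2 \<ge> 0"
  using M2 inP[of p] norm_ge_zero order_trans by (metis (no_types, lifting) length_replicate)

lemma taylor:
  assumes p: "supn (p - x0) < R" and q: "supn (q - x0) < R"
  shows "\<bar>freal f q - freal f p - Gr p \<bullet> (q - p)\<bar> \<le> real CARD('n) ^ 2 * M2 * (norm (q - p))\<^sup>2"
proof -
  let ?K = "real CARD('n) * M2 * norm (q - p)"
  have M0: "M2 \<ge> 0" using M2_nonneg[OF p] .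
  have step: "\<bar>freal f (mix p q (insert j S)) - freal f (mix p q S) - Gr p $ j * (q $ j - p $ j)\<bar>
      \<le> ?K * \<bar>q $ j - p $ j\<bar>" if jS: "j \<notin> S" for S j
  proof -
    let ?m = "mix p q S"
    let ?H = "\<lambda>s. freal f (?m + axis j s) - Gr p $ j * s"
    have "\<bar>?H (q $ j - p $ j) - ?H 0\<bar> \<le> ?K * \<bar>q $ j - p $ j\<bar>"
    proof (rule axisbound)
      fix s assume s: "s \<in> closed_segment 0 (q $ j - p $ j)"
      have inB: "supn (?m + axis j s - x0) < R" using stair_point[OF p q jS s] by simp
      have nb: "norm (?m + axis j s - p) \<le> norm (q - p)" using stair_point[OF p q jS s] by simp
      show "(?H has_real_derivative (Gr (?m + axis j s) $ j - Gr p $ j)) (at s)"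
        using F_deriv[OF inB] by (auto intro!: derivative_eq_intros)
      have "\<bar>Gr (?m + axis j s) $ j - Gr p $ j\<bar> \<le> M2 * (\<Sum>i\<in>UNIV. \<bar>(?m + axis j s - p) $ i\<bar>)"
        using lipG_comp[OF p inB, of j] by simp
      also have "\<dots> \<le> M2 * (real CARD('n) * norm (?m + axis j s - p))"
        by (rule mult_left_mono[OF sum_abs_le_card_norm M0])
      also have "\<dots> \<le> M2 * (real CARD('n) * norm (q - p))"
        using nb M0 by (simp add: mult_left_mono)
      finally show "\<bar>Gr (?m + axis j s) $ j - Gr p $ j\<bar> \<le> ?K" by (simp add: mult.assoc mult.left_commute)
    qed
    then show ?thesis by (simp add: mix_insert[OF jS] algebra_simps)
  qed
  have "\<bar>freal f q - freal f p - (\<Sum>j\<in>UNIV. Gr p $ j * (q $ j - p $ j))\<bar> \<le> (\<Sum>j\<in>UNIV. ?K * \<bar>q $ j - p $ j\<bar>)"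
    by (rule stair[of "freal f" p q "\<lambda>j. Gr p $ j * (q $ j - p $ j)" "\<lambda>j. ?K * \<bar>q $ j - p $ j\<bar>", OF step])
  moreover have "(\<Sum>j\<in>UNIV. Gr p $ j * (q $ j - p $ j)) = Gr p \<bullet> (q - p)"
    by (simp add: inner_vec_def)
  moreover have "(\<Sum>j\<in>UNIV. ?K * \<bar>q $ j - p $ j\<bar>) \<le> real CARD('n) ^ 2 * M2 * (norm (q - p))\<^sup>2"
  proof -
    have "(\<Sum>j\<in>UNIV. ?K * \<bar>q $ j - p $ j\<bar>) = ?K * (\<Sum>j\<in>UNIV. \<bar>(q - p) $ j\<bar>)"
      by (simp add: sum_distrib_left)
    also have "\<dots> \<le> ?K * (real CARD('n) * norm (q - p))"
      by (rule mult_left_mono[OF sum_abs_le_card_norm]) (use M0 in simp)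
    also have "\<dots> = real CARD('n) ^ 2 * M2 * (norm (q - p))\<^sup>2"
      by (simp add: power2_eq_square)
    finally show ?thesis .
  qed
  ultimately show ?thesis by linarith
qed

end


lemma main:
  fixes f :: "complex^'n \<Rightarrow> complex" and x0 h :: "real^'n" and b :: "'n \<Rightarrow> real^'n" and i0 :: 'n
    and c \<rho>0 M2 \<rho>1 \<delta>0 \<rho> :: real
  assumes c: "0 < c" "c \<le> 1 / (16 * real CARD('n) ^ 2)"
    and an: "analytic_cn f {z. supn (z - cvec x0) < \<rho>0}"
    and M2b: "\<forall>is z. length is = 2 \<and> z \<in> {z. supn (z - cvec x0) < \<rho>0} \<longrightarrow> norm (cpds is f z) \<le> M2"
    and M2p: "0 < M2" and mu0p: "norm (rgrad f x0) > 0"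
    and orth: "\<forall>i j. b i \<bullet> b j = (if i = j then 1 else 0)"
    and bi0: "b i0 = (1 / norm (rgrad f x0)) *\<^sub>R rgrad f x0"
    and r1p: "0 < \<rho>1" and r1b: "\<rho>1 \<le> c * min \<rho>0 (norm (rgrad f x0) / M2)"
    and hb: "supn h < \<rho>0 / 2"
    and ang: "(rgrad f (x0 + h) \<bullet> rgrad f x0)\<^sup>2 \<le> (1 - \<delta>0\<^sup>2) * (norm (rgrad f (x0 + h)))\<^sup>2 * (norm (rgrad f x0))\<^sup>2"
    and d0: "0 < \<delta>0" "\<delta>0 \<le> 1" and rp: "0 < \<rho>"
    and rb: "\<rho> \<le> c * min (c * \<rho>1) (min (norm (rgrad f x0)) (norm (rgrad f (x0 + h))) / M2 * \<delta>0\<^sup>2)"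
  shows "\<exists>y. y $ i0 = 0 \<and> norm y \<le> \<rho> \<and>
     (let x0' = phi b i0 (THE \<xi>. \<bar>\<xi>\<bar> < \<rho>1 \<and> freal f (phi b i0 \<xi> y x0) = freal f x0) y x0 in
       norm (x0' - x0) \<le> 2 * \<rho> \<and>
       \<bar>freal f (x0' + h) - freal f (x0 + h)\<bar> \<ge> 1/2 * norm (rgrad f (x0 + h)) * \<delta>0\<^sup>2 * \<rho>)"
proof -
  interpret L: rs f x0 \<rho>0 M2 using an M2b by unfold_locales
  define K where "K = real CARD('n) ^ 2"
  have K1: "K \<ge> 1" unfolding K_def using card_ge_0_finite[of "UNIV::'n set"] by simp
  have cK: "16 * K * c \<le> 1"
  proof -
    have "c * (16 * K) \<le> 1" using c(2) K1 by (simp add: K_def pos_le_divide_eq)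
    then show ?thesis by (simp add: mult.commute)
  qed
  have c1: "c \<le> 1/16"
  proof -
    have "16 * c \<le> 16 * K * c" using K1 c(1) by simp
    then show ?thesis using cK by simp
  qed
  define x1 where "x1 = x0 + h"
  define G0 where "G0 = rgrad f x0"
  define G1 where "G1 = rgrad f x1"
  define \<mu>0 where "\<mu>0 = norm G0"
  define \<mu>1 where "\<mu>1 = norm G1"
  define nv where "nv = b i0"
  have mu0p': "\<mu>0 > 0" using mu0p by (simp add: \<mu>0_def G0_def)
  have nvn: "nv \<bullet> nv = 1" using orth by (simp add: nv_def)
  have nvnorm: "norm nv = 1" using nvn by (simp add: norm_eq_sqrt_inner)
  have G0eq: "G0 = \<mu>0 *\<^sub>R nv"
    using bi0 mu0p' by (simp add: nv_def G0_def \<mu>0_def)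
  have G0nv: "G0 \<bullet> nv = \<mu>0" using nvn by (simp add: G0eq)
  have rb': "\<rho> \<le> c * (min \<mu>0 \<mu>1 / M2 * \<delta>0\<^sup>2)" "\<rho> \<le> c * (c * \<rho>1)"
  proof -
    let ?X = "min (norm (rgrad f x0)) (norm (rgrad f (x0 + h))) / M2 * \<delta>0\<^sup>2"
    have "c * min (c * \<rho>1) ?X \<le> c * ?X" "c * min (c * \<rho>1) ?X \<le> c * (c * \<rho>1)"
      using c(1) by (intro mult_left_mono; simp)+
    then show "\<rho> \<le> c * (min \<mu>0 \<mu>1 / M2 * \<delta>0\<^sup>2)" "\<rho> \<le> c * (c * \<rho>1)"
      using rb by (auto simp: \<mu>0_def \<mu>1_def G0_def G1_def x1_def)
  qed
  have M2\<rho>: "M2 * \<rho> \<le> c * min \<mu>0 \<mu>1 * \<delta>0\<^sup>2"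
    using rb'(1) M2p by (simp add: field_simps)
  have minp: "min \<mu>0 \<mu>1 > 0"
  proof -
    have "0 < M2 * \<rho>" using M2p rp by simp
    then have "0 < c * min \<mu>0 \<mu>1 * \<delta>0\<^sup>2" using M2\<rho> by linarith
    then show ?thesis using c(1) d0 by (simp add: zero_less_mult_iff)
  qed
  have mu1p: "\<mu>1 > 0" using minp by simp
  have r1b': "\<rho>1 \<le> c * \<rho>0" "M2 * \<rho>1 \<le> c * \<mu>0"
  proof -
    let ?X = "norm (rgrad f x0) / M2"
    have a: "c * min \<rho>0 ?X \<le> c * \<rho>0" "c * min \<rho>0 ?X \<le> c * ?X"
      using c(1) by (intro mult_left_mono; simp)+
    show "\<rho>1 \<le> c * \<rho>0" using a r1b by linarith
    have "\<rho>1 \<le> c * ?X" using a r1b by linarith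
    then have "M2 * \<rho>1 \<le> M2 * (c * ?X)" using M2p by (simp del: times_divide_eq_right)
    then show "M2 * \<rho>1 \<le> c * \<mu>0" using M2p by (simp add: \<mu>0_def G0_def)
  qed
  have r0p: "\<rho>0 > 0"
  proof (rule ccontr)
    assume "\<not> \<rho>0 > 0"
    then have "c * \<rho>0 \<le> 0" using c(1) by (simp add: mult_nonneg_nonpos)
    then show False using r1b'(1) r1p by linarith
  qed
  have inbox: "supn (x - x0) < \<rho>0" if "norm (x - x0) < \<rho>0" for x
    using supn_le_norm[of "x - x0"] that by linarith
  have G0r: "L.Gr x0 = G0" using L.rgrad_eq[of x0] r0p by (simp add: G0_def supn_def)
  have x1b: "supn (x1 - x0) < \<rho>0" using hb r0p by (simp add: x1_def)
  have G1r: "L.Gr x1 = G1" using L.rgrad_eq[OF x1b] by (simp add: G1_def)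
  have CS: "\<bar>u \<bullet> v\<bar> \<le> norm u * norm v" for u v :: "real^'n"
    by (rule Cauchy_Schwarz_ineq2)
  define a where "a = G1 \<bullet> nv"
  define T where "T = G1 - a *\<^sub>R nv"
  have Tnv: "T \<bullet> nv = 0" using nvn by (simp add: T_def a_def inner_diff_left)
  have G1G0: "G1 \<bullet> G0 = \<mu>0 * a" by (simp add: G0eq a_def)
  have asq: "a\<^sup>2 \<le> (1 - \<delta>0\<^sup>2) * \<mu>1\<^sup>2"
  proof -
    have "(\<mu>0 * a)\<^sup>2 \<le> (1 - \<delta>0\<^sup>2) * \<mu>1\<^sup>2 * \<mu>0\<^sup>2"
      using ang G1G0 by (simp add: \<mu>0_def \<mu>1_def G0_def G1_def x1_def)
    then have "\<mu>0\<^sup>2 * a\<^sup>2 \<le> \<mu>0\<^sup>2 * ((1 - \<delta>0\<^sup>2) * \<mu>1\<^sup>2)" by (simp add: power_mult_distrib algebra_simps)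
    then show ?thesis using mu0p' by simp
  qed
  have Tsq: "(norm T)\<^sup>2 = \<mu>1\<^sup>2 - a\<^sup>2"
  proof -
    have "(norm T)\<^sup>2 = T \<bullet> T" by (simp add: power2_norm_eq_inner)
    also have "\<dots> = G1 \<bullet> G1 - 2 * a * (G1 \<bullet> nv) + a * a * (nv \<bullet> nv)"
      by (simp add: T_def inner_diff_left inner_diff_right inner_commute algebra_simps)
    also have "\<dots> = \<mu>1\<^sup>2 - a\<^sup>2" using nvn power2_norm_eq_inner[of G1] by (simp add: a_def \<mu>1_def power2_eq_square)
    finally show ?thesis .
  qed
  have Tlb: "\<delta>0 * \<mu>1 \<le> norm T"
  proof (rule power2_le_imp_le)
    show "(\<delta>0 * \<mu>1)\<^sup>2 \<le> (norm T)\<^sup>2" using Tsq asq by (simp add: power_mult_distrib algebra_simps)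
  qed simp
  have Tpos: "norm T > 0" using Tlb d0 mu1p by (smt (verit) mult_pos_pos)
  define w where "w = (\<rho> / norm T) *\<^sub>R T"
  have wn: "norm w = \<rho>" using Tpos rp by (simp add: w_def)
  have wnv: "w \<bullet> nv = 0" by (simp add: w_def Tnv)
  have G1T: "G1 \<bullet> T = (norm T)\<^sup>2"
  proof -
    have "G1 = T + a *\<^sub>R nv" by (simp add: T_def)
    then have "G1 \<bullet> T = T \<bullet> T + a * (nv \<bullet> T)" by (simp add: inner_add_left)
    then show ?thesis using Tnv by (simp add: power2_norm_eq_inner inner_commute)
  qed
  have G1w: "G1 \<bullet> w = \<rho> * norm T" using Tpos by (simp add: w_def G1T power2_eq_square)
  have G0w: "G0 \<bullet> w = 0" using wnv by (simp add: G0eq inner_commute)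
  define y where "y = (\<chi> j. if j = i0 then 0 else w \<bullet> b j)"
  have y0: "y $ i0 = 0" by (simp add: y_def)
  have wb0: "w \<bullet> b i0 = 0" using wnv by (simp add: nv_def)
  have wsum: "(\<Sum>j\<in>UNIV - {i0}. (y $ j) *\<^sub>R b j) = w"
  proof -
    have "(\<Sum>j\<in>UNIV - {i0}. (y $ j) *\<^sub>R b j) = (\<Sum>j\<in>UNIV - {i0}. (w \<bullet> b j) *\<^sub>R b j)"
      by (rule sum.cong) (auto simp: y_def)
    also have "\<dots> = (\<Sum>j\<in>UNIV. (w \<bullet> b j) *\<^sub>R b j) - (w \<bullet> b i0) *\<^sub>R b i0"
      by (simp add: sum_diff1)
    also have "\<dots> = w" using onb_expand[OF orth] wb0 by simp
    finally show ?thesis .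
  qed
  have ynorm: "norm y = \<rho>"
  proof -
    have yy: "y $ j * y $ j = (w \<bullet> b j) * (w \<bullet> b j)" for j using wb0 by (simp add: y_def)
    have "(norm y)\<^sup>2 = (\<Sum>j\<in>UNIV. (w \<bullet> b j) * (w \<bullet> b j))"
      by (simp add: power2_norm_eq_inner inner_vec_def yy)
    also have "\<dots> = w \<bullet> (\<Sum>j\<in>UNIV. (w \<bullet> b j) *\<^sub>R b j)" by (simp add: inner_sum_right)
    also have "\<dots> = (norm w)\<^sup>2" using onb_expand[OF orth] by (simp add: power2_norm_eq_inner)
    finally have "(norm y)\<^sup>2 = \<rho>\<^sup>2" using wn by simp
    then show ?thesis using rp norm_ge_zero[of y] by (auto simp: power2_eq_iff)
  qed
  define pt where "pt \<xi> = x0 + \<xi> *\<^sub>R nv + w" for \<xi>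
  have phi_eq: "phi b i0 \<xi> y x0 = pt \<xi>" for \<xi>
    unfolding phi_def pt_def wsum nv_def by simp
  define \<Phi> where "\<Phi> \<xi> = freal f (pt \<xi>)" for \<xi>
  have ptn: "norm (pt \<xi> - x0) \<le> \<bar>\<xi>\<bar> + \<rho>" for \<xi>
  proof -
    have "norm (pt \<xi> - x0) = norm (\<xi> *\<^sub>R nv + w)" by (simp add: pt_def)
    also have "\<dots> \<le> norm (\<xi> *\<^sub>R nv) + norm w" by (rule norm_triangle_ineq)
    finally show ?thesis using nvnorm wn by simp
  qed
  have rr1: "\<rho> \<le> \<rho>1"
  proof -
    have "c * (c * \<rho>1) \<le> 1 * (1 * \<rho>1)" using c1 c(1) r1p
      by (intro mult_mono) auto
    then show ?thesis using rb'(2) by simp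
  qed
  have ptbox: "supn (pt \<xi> - x0) < \<rho>0" if "\<bar>\<xi>\<bar> \<le> \<rho>1" for \<xi>
  proof (rule inbox)
    have "c * \<rho>0 < \<rho>0 / 2" using c1 r0p by simp
    then show "norm (pt \<xi> - x0) < \<rho>0" using ptn[of \<xi>] that rr1 r1b'(1) by linarith
  qed
  have KM: "K * M2 * \<rho>1 \<le> \<mu>0 / 16"
  proof -
    have "K * (M2 * \<rho>1) \<le> K * (c * \<mu>0)" using r1b'(2) K1 by simp
    also have "\<dots> = (16 * K * c) * \<mu>0 / 16" by simp
    also have "\<dots> \<le> 1 * \<mu>0 / 16" using cK mu0p' by (intro divide_right_mono mult_right_mono) auto
    finally show ?thesis by (simp add: mult.assoc)
  qed
  have Gdiff: "norm (L.Gr (pt \<xi>) - G0) \<le> 2 * K * M2 * \<rho>1" if "\<bar>\<xi>\<bar> \<le> \<rho>1" for \<xi>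
  proof -
    have "norm (L.Gr (pt \<xi>) - L.Gr x0) \<le> K * M2 * norm (pt \<xi> - x0)"
      using L.lipG[of x0 "pt \<xi>"] r0p ptbox[OF that] by (simp add: K_def supn_def)
    also have "\<dots> \<le> K * M2 * (2 * \<rho>1)"
      using ptn[of \<xi>] that rr1 K1 M2p by (intro mult_left_mono) auto
    finally show ?thesis using G0r by simp
  qed
  have grad_lb: "L.Gr (pt \<xi>) \<bullet> nv \<ge> \<mu>0 - 2 * K * M2 * \<rho>1" if "\<bar>\<xi>\<bar> \<le> \<rho>1" for \<xi>
  proof -
    have "L.Gr (pt \<xi>) \<bullet> nv = G0 \<bullet> nv + (L.Gr (pt \<xi>) - G0) \<bullet> nv" by (simp add: inner_diff_left)
    moreover have "\<bar>(L.Gr (pt \<xi>) - G0) \<bullet> nv\<bar> \<le> norm (L.Gr (pt \<xi>) - G0)"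
      using CS[of "L.Gr (pt \<xi>) - G0" nv] nvnorm by simp
    ultimately show ?thesis using Gdiff[OF that] G0nv by linarith
  qed
  have grad_ub: "norm (L.Gr (pt \<xi>)) \<le> \<mu>0 + 2 * K * M2 * \<rho>1" if "\<bar>\<xi>\<bar> \<le> \<rho>1" for \<xi>
    using Gdiff[OF that] norm_triangle_ineq2[of "L.Gr (pt \<xi>)" G0] by (simp add: \<mu>0_def)
  have tay\<Phi>: "\<bar>\<Phi> \<xi>2 - \<Phi> \<xi>1 - (\<xi>2 - \<xi>1) * (L.Gr (pt \<xi>1) \<bullet> nv)\<bar> \<le> K * M2 * (\<xi>2 - \<xi>1)\<^sup>2"
    if "\<bar>\<xi>1\<bar> \<le> \<rho>1" "\<bar>\<xi>2\<bar> \<le> \<rho>1" for \<xi>1 \<xi>2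
  proof -
    have d: "pt \<xi>2 - pt \<xi>1 = (\<xi>2 - \<xi>1) *\<^sub>R nv" by (simp add: pt_def algebra_simps)
    have "norm (pt \<xi>2 - pt \<xi>1) = \<bar>\<xi>2 - \<xi>1\<bar>" using nvnorm by (simp add: d)
    then show ?thesis using L.taylor[OF ptbox[OF that(1)] ptbox[OF that(2)]] d
      by (simp add: \<Phi>_def K_def nvnorm power2_abs)
  qed
  have mono: "\<Phi> \<xi>2 - \<Phi> \<xi>1 \<ge> (\<xi>2 - \<xi>1) * \<mu>0 / 2"
    if "\<bar>\<xi>1\<bar> \<le> \<rho>1" "\<bar>\<xi>2\<bar> \<le> \<rho>1" "\<xi>1 \<le> \<xi>2" for \<xi>1 \<xi>2
  proof -
    define \<Delta> where "\<Delta> = \<xi>2 - \<xi>1"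
    have D0: "\<Delta> \<ge> 0" "\<Delta> \<le> 2 * \<rho>1" using that by (auto simp: \<Delta>_def)
    have t: "\<Phi> \<xi>2 - \<Phi> \<xi>1 \<ge> \<Delta> * (L.Gr (pt \<xi>1) \<bullet> nv) - K * M2 * \<Delta>\<^sup>2"
      using tay\<Phi>[OF that(1,2)] by (simp add: \<Delta>_def)
    define q where "q = K * M2 * \<Delta> * \<rho>1"
    have "\<Delta> * (\<mu>0 - 2 * K * M2 * \<rho>1) \<le> \<Delta> * (L.Gr (pt \<xi>1) \<bullet> nv)"
      using grad_lb[OF that(1)] D0 by (intro mult_left_mono) auto
    then have f1: "\<Delta> * \<mu>0 - 2 * q \<le> \<Delta> * (L.Gr (pt \<xi>1) \<bullet> nv)"
      by (simp add: q_def algebra_simps)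
    have f2: "K * M2 * \<Delta>\<^sup>2 \<le> 2 * q"
    proof -
      have "K * M2 * \<Delta>\<^sup>2 = (K * M2 * \<Delta>) * \<Delta>" by (simp add: power2_eq_square)
      also have "\<dots> \<le> (K * M2 * \<Delta>) * (2 * \<rho>1)"
        using D0 K1 M2p by (intro mult_left_mono) auto
      finally show ?thesis by (simp add: q_def algebra_simps)
    qed
    have "\<Delta> * (K * M2 * \<rho>1) \<le> \<Delta> * (\<mu>0 / 16)"
      using KM D0 by (intro mult_left_mono) auto
    then have f3: "16 * q \<le> \<Delta> * \<mu>0" by (simp add: q_def algebra_simps)
    have f4: "0 \<le> \<Delta> * \<mu>0" using D0 mu0p' by simp
    show ?thesis using t f1 f2 f3 f4 unfolding \<Delta>_def[symmetric] by linarith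
  qed
  define E0 where "E0 = freal f x0"
  have M2\<rho>0: "M2 * \<rho> \<le> c * \<mu>0"
  proof -
    have "c * min \<mu>0 \<mu>1 * \<delta>0\<^sup>2 \<le> c * \<mu>0 * 1"
      using c(1) minp d0 by (intro mult_mono) (auto simp: power_le_one)
    then show ?thesis using M2\<rho> by simp
  qed
  have Phi0: "\<bar>\<Phi> 0 - E0\<bar> \<le> K * M2 * \<rho>\<^sup>2"
  proof -
    have "pt 0 - x0 = w" by (simp add: pt_def)
    then show ?thesis
      using L.taylor[of x0 "pt 0"] r0p ptbox[of 0] r1p G0r G0w wn
      by (simp add: \<Phi>_def E0_def K_def supn_def)
  qed
  have KMr2: "K * M2 * \<rho>\<^sup>2 < \<rho>1 * \<mu>0 / 4"
  proof -
    have "K * M2 * \<rho>\<^sup>2 = K * (M2 * \<rho>) * \<rho>" by (simp add: power2_eq_square)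
    also have "\<dots> \<le> K * (c * \<mu>0) * \<rho>" using M2\<rho>0 K1 rp by (intro mult_right_mono mult_left_mono) auto
    also have "\<dots> = (K * c) * \<mu>0 * \<rho>" by simp
    also have "\<dots> \<le> (1/16) * \<mu>0 * \<rho>1"
      using cK mu0p' rr1 c(1) K1 rp by (intro mult_mono) auto
    finally have "K * M2 * \<rho>\<^sup>2 \<le> (1/16) * \<mu>0 * \<rho>1" .
    moreover have "0 < \<mu>0 * \<rho>1" using mu0p' r1p by simp
    ultimately show ?thesis by (simp add: mult.commute)
  qed
  have Pm: "\<Phi> (- (\<rho>1/2)) < E0" and Pp: "E0 < \<Phi> (\<rho>1/2)"
  proof -
    have "\<Phi> 0 - \<Phi> (- (\<rho>1/2)) \<ge> (0 - - (\<rho>1/2)) * \<mu>0 / 2" using mono[of "- (\<rho>1/2)" 0] r1p by simp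
    then show "\<Phi> (- (\<rho>1/2)) < E0" using Phi0 KMr2 by simp
    have "\<Phi> (\<rho>1/2) - \<Phi> 0 \<ge> (\<rho>1/2 - 0) * \<mu>0 / 2" using mono[of 0 "\<rho>1/2"] r1p by simp
    then show "E0 < \<Phi> (\<rho>1/2)" using Phi0 KMr2 by simp
  qed
  have cont: "continuous_on {- (\<rho>1/2)..\<rho>1/2} \<Phi>"
  proof (rule lipschitz_on_continuous_on)
    show "(\<mu>0 + 4 * K * M2 * \<rho>1)-lipschitz_on {- (\<rho>1/2)..\<rho>1/2} \<Phi>"
    proof (rule lipschitz_onI)
      fix \<xi>1 \<xi>2 assume x: "\<xi>1 \<in> {- (\<rho>1/2)..\<rho>1/2}" "\<xi>2 \<in> {- (\<rho>1/2)..\<rho>1/2}"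
      then have b: "\<bar>\<xi>1\<bar> \<le> \<rho>1" "\<bar>\<xi>2\<bar> \<le> \<rho>1" "\<bar>\<xi>2 - \<xi>1\<bar> \<le> 2 * \<rho>1" by auto
      have g: "\<bar>L.Gr (pt \<xi>1) \<bullet> nv\<bar> \<le> \<mu>0 + 2 * K * M2 * \<rho>1"
        using CS[of "L.Gr (pt \<xi>1)" nv] nvnorm grad_ub[OF b(1)] by simp
      have "\<bar>\<Phi> \<xi>2 - \<Phi> \<xi>1\<bar> \<le> \<bar>(\<xi>2 - \<xi>1) * (L.Gr (pt \<xi>1) \<bullet> nv)\<bar> + K * M2 * (\<xi>2 - \<xi>1)\<^sup>2"
        using tay\<Phi>[OF b(1,2)] by linarith
      also have "\<dots> \<le> \<bar>\<xi>2 - \<xi>1\<bar> * (\<mu>0 + 2 * K * M2 * \<rho>1) + \<bar>\<xi>2 - \<xi>1\<bar> * (2 * K * M2 * \<rho>1)"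
      proof (rule add_mono)
        show "\<bar>(\<xi>2 - \<xi>1) * (L.Gr (pt \<xi>1) \<bullet> nv)\<bar> \<le> \<bar>\<xi>2 - \<xi>1\<bar> * (\<mu>0 + 2 * K * M2 * \<rho>1)"
          using g by (simp add: abs_mult mult_left_mono)
        have "K * M2 * (\<xi>2 - \<xi>1)\<^sup>2 = (K * M2 * \<bar>\<xi>2 - \<xi>1\<bar>) * \<bar>\<xi>2 - \<xi>1\<bar>"
          by (simp add: power2_eq_square abs_mult_self_eq)
        also have "\<dots> \<le> (K * M2 * \<bar>\<xi>2 - \<xi>1\<bar>) * (2 * \<rho>1)"
          using b(3) K1 M2p by (intro mult_left_mono) auto
        finally show "K * M2 * (\<xi>2 - \<xi>1)\<^sup>2 \<le> \<bar>\<xi>2 - \<xi>1\<bar> * (2 * K * M2 * \<rho>1)"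
          by (simp add: algebra_simps)
      qed
      also have "\<dots> = (\<mu>0 + 4 * K * M2 * \<rho>1) * dist \<xi>2 \<xi>1"
        by (simp add: dist_real_def algebra_simps)
      finally show "dist (\<Phi> \<xi>1) (\<Phi> \<xi>2) \<le> (\<mu>0 + 4 * K * M2 * \<rho>1) * dist \<xi>1 \<xi>2"
        by (simp add: dist_real_def dist_commute abs_minus_commute)
    next
      show "0 \<le> \<mu>0 + 4 * K * M2 * \<rho>1" using mu0p' K1 M2p r1p by simp
    qed
  qed
  obtain \<xi>s where xs: "- (\<rho>1/2) \<le> \<xi>s" "\<xi>s \<le> \<rho>1/2" "\<Phi> \<xi>s = E0"
    using IVT'[of \<Phi> "- (\<rho>1/2)" E0 "\<rho>1/2", OF _ _ _ cont] Pm Pp r1p by force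
  have xsb: "\<bar>\<xi>s\<bar> < \<rho>1" using xs r1p by auto
  have the_eq: "(THE \<xi>. \<bar>\<xi>\<bar> < \<rho>1 \<and> freal f (phi b i0 \<xi> y x0) = freal f x0) = \<xi>s"
  proof (rule the_equality)
    show "\<bar>\<xi>s\<bar> < \<rho>1 \<and> freal f (phi b i0 \<xi>s y x0) = freal f x0"
      using xsb xs(3) by (simp add: phi_eq \<Phi>_def E0_def)
  next
    fix \<xi> assume "\<bar>\<xi>\<bar> < \<rho>1 \<and> freal f (phi b i0 \<xi> y x0) = freal f x0"
    then have x: "\<bar>\<xi>\<bar> < \<rho>1" "\<Phi> \<xi> = E0" by (auto simp: phi_eq \<Phi>_def E0_def)
    show "\<xi> = \<xi>s"
    proof (rule ccontr)
      assume ne: "\<xi> \<noteq> \<xi>s"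
      show False
      proof (cases "\<xi> < \<xi>s")
        case True
        have "0 < (\<xi>s - \<xi>) * \<mu>0 / 2" using True mu0p' by simp
        then show False using mono[of \<xi> \<xi>s] True x xs(3) xsb by simp
      next
        case False
        then have "\<xi>s < \<xi>" using ne by simp
        moreover have "0 < (\<xi> - \<xi>s) * \<mu>0 / 2" using \<open>\<xi>s < \<xi>\<close> mu0p' by simp
        ultimately show False using mono[of \<xi>s \<xi>] x xs(3) xsb by simp
      qed
    qed
  qed
  have xs_small: "\<bar>\<xi>s\<bar> * \<mu>0 \<le> 2 * K * M2 * \<rho>\<^sup>2"
  proof (cases "0 \<le> \<xi>s")
    case True
    have "\<Phi> \<xi>s - \<Phi> 0 \<ge> (\<xi>s - 0) * \<mu>0 / 2" using mono[of 0 \<xi>s] True xsb r1p by simp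
    then show ?thesis using Phi0 xs(3) True by simp
  next
    case False
    have "\<Phi> 0 - \<Phi> \<xi>s \<ge> (0 - \<xi>s) * \<mu>0 / 2" using mono[of \<xi>s 0] False xsb r1p by simp
    then show ?thesis using Phi0 xs(3) False by simp
  qed
  define Z where "Z = \<rho> * \<delta>0\<^sup>2 * \<mu>1"
  have Zp: "Z \<ge> 0" using rp mu1p by (simp add: Z_def)
  have M2\<rho>1: "M2 * \<rho> \<le> c * \<mu>1 * \<delta>0\<^sup>2"
  proof -
    have "c * min \<mu>0 \<mu>1 * \<delta>0\<^sup>2 \<le> c * \<mu>1 * \<delta>0\<^sup>2"
      using c(1) by (intro mult_right_mono mult_left_mono) auto
    then show ?thesis using M2\<rho> by simp
  qed
  have M2\<rho>2: "M2 * \<rho> \<le> c * \<mu>0 * \<delta>0\<^sup>2"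
  proof -
    have "c * min \<mu>0 \<mu>1 * \<delta>0\<^sup>2 \<le> c * \<mu>0 * \<delta>0\<^sup>2"
      using c(1) by (intro mult_right_mono mult_left_mono) auto
    then show ?thesis using M2\<rho> by simp
  qed
  have xsB: "\<bar>\<xi>s\<bar> \<le> 2 * (K * c) * \<delta>0\<^sup>2 * \<rho>"
  proof -
    have "\<bar>\<xi>s\<bar> * \<mu>0 \<le> 2 * K * (M2 * \<rho>) * \<rho>" using xs_small by (simp add: power2_eq_square mult.assoc)
    also have "\<dots> \<le> 2 * K * (c * \<mu>0 * \<delta>0\<^sup>2) * \<rho>"
      using M2\<rho>2 K1 rp by (intro mult_right_mono mult_left_mono) auto
    also have "\<dots> = (2 * (K * c) * \<delta>0\<^sup>2 * \<rho>) * \<mu>0" by (simp add: algebra_simps)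
    finally show ?thesis using mu0p' by simp
  qed
  have Kc: "K * c \<le> 1/16" using cK by simp
  have d2: "\<delta>0\<^sup>2 \<le> 1" using d0 by (simp add: power_le_one)
  have xsr: "\<bar>\<xi>s\<bar> \<le> \<rho>"
  proof -
    have "2 * (K * c) * \<delta>0\<^sup>2 * \<rho> \<le> 2 * (1/16) * 1 * \<rho>"
      using Kc d2 rp K1 c(1) by (intro mult_right_mono mult_mono) auto
    then show ?thesis using xsB rp by linarith
  qed
  define d where "d = \<xi>s *\<^sub>R nv + w"
  have dn: "norm d \<le> 2 * \<rho>"
    using ptn[of \<xi>s] xsr by (simp add: pt_def d_def)
  have x0'e: "pt \<xi>s - x0 = d" by (simp add: pt_def d_def)
  have qb: "supn (pt \<xi>s + h - x0) < \<rho>0"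
  proof -
    have "supn (pt \<xi>s + h - x0) = supn (h + d)" using x0'e by (simp add: algebra_simps)
    also have "\<dots> \<le> supn h + supn d" by (rule supn_triangle)
    also have "\<dots> \<le> supn h + norm d" using supn_le_norm[of d] by simp
    also have "\<dots> < \<rho>0"
    proof -
      have "c * \<rho>0 \<le> (1/16) * \<rho>0" using c1 r0p by (intro mult_right_mono) auto
      then show ?thesis using hb dn rr1 r1b'(1) r0p by linarith
    qed
    finally show ?thesis .
  qed
  have tay: "\<bar>freal f (pt \<xi>s + h) - freal f x1 - G1 \<bullet> d\<bar> \<le> K * M2 * (norm d)\<^sup>2"
    using L.taylor[OF x1b qb] G1r x0'e by (simp add: K_def x1_def algebra_simps)
  have f2: "K * M2 * (norm d)\<^sup>2 \<le> 4 * (K * c) * Z"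
  proof -
    have "(norm d)\<^sup>2 \<le> (2 * \<rho>)\<^sup>2" using dn by (intro power_mono) auto
    then have "K * M2 * (norm d)\<^sup>2 \<le> K * M2 * (4 * \<rho>\<^sup>2)" using K1 M2p by (simp add: power_mult_distrib)
    also have "\<dots> = 4 * K * (M2 * \<rho>) * \<rho>" by (simp add: power2_eq_square)
    also have "\<dots> \<le> 4 * K * (c * \<mu>1 * \<delta>0\<^sup>2) * \<rho>"
      using M2\<rho>1 K1 rp by (intro mult_right_mono mult_left_mono) auto
    also have "\<dots> = 4 * (K * c) * Z" by (simp add: Z_def algebra_simps)
    finally show ?thesis .
  qed
  have G1d: "G1 \<bullet> d = \<xi>s * a + \<rho> * norm T" by (simp add: d_def inner_add_right G1w a_def)
  have f1: "\<bar>\<xi>s * a\<bar> \<le> 2 * (K * c) * Z"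
  proof -
    have "\<bar>a\<bar> \<le> \<mu>1" using CS[of G1 nv] nvnorm by (simp add: a_def \<mu>1_def)
    then have "\<bar>\<xi>s * a\<bar> \<le> \<bar>\<xi>s\<bar> * \<mu>1" by (simp add: abs_mult mult_left_mono)
    also have "\<dots> \<le> (2 * (K * c) * \<delta>0\<^sup>2 * \<rho>) * \<mu>1" using xsB mu1p by (intro mult_right_mono) auto
    also have "\<dots> = 2 * (K * c) * Z" by (simp add: Z_def algebra_simps)
    finally show ?thesis .
  qed
  have f3: "\<rho> * norm T \<ge> Z"
  proof -
    have "\<delta>0\<^sup>2 * \<mu>1 \<le> \<delta>0 * \<mu>1" using d0 mu1p by (intro mult_right_mono) (auto simp: power2_eq_square mult_left_le_one_le)
    also have "\<dots> \<le> norm T" using Tlb .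
    finally show ?thesis using rp by (simp add: Z_def mult.assoc mult_left_mono)
  qed
  have f4: "(K * c) * Z \<le> Z / 16"
    using mult_right_mono[OF Kc Zp] by simp
  have fin: "freal f (pt \<xi>s + h) - freal f x1 \<ge> Z / 2"
    using tay f1 f2 f3 f4 G1d Zp by linarith
  show ?thesis
  proof (intro exI[of _ y] conjI)
    show "y $ i0 = 0" by (rule y0)
    show "norm y \<le> \<rho>" using ynorm by simp
    have "norm (pt \<xi>s - x0) \<le> 2 * \<rho>" using x0'e dn by simp
    moreover have "\<bar>freal f (pt \<xi>s + h) - freal f (x0 + h)\<bar> \<ge> 1/2 * norm (rgrad f (x0 + h)) * \<delta>0\<^sup>2 * \<rho>"
    proof -
      have "Z = 1/2 * norm (rgrad f (x0 + h)) * \<delta>0\<^sup>2 * \<rho> * 2"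
        by (simp add: Z_def \<mu>1_def G1_def x1_def)
      then show ?thesis using fin unfolding x1_def by linarith
    qed
    ultimately show "let x0' = phi b i0 (THE \<xi>. \<bar>\<xi>\<bar> < \<rho>1 \<and> freal f (phi b i0 \<xi> y x0) = freal f x0) y x0 in
       norm (x0' - x0) \<le> 2 * \<rho> \<and>
       \<bar>freal f (x0' + h) - freal f (x0 + h)\<bar> \<ge> 1/2 * norm (rgrad f (x0 + h)) * \<delta>0\<^sup>2 * \<rho>"
      unfolding the_eq unfolding Let_def phi_eq by simp
  qed
qed


theorem lemma4p7:
  "\<exists>c0>0. \<forall>c. 0 < c \<and> c \<le> c0 \<longrightarrow>
    (\<forall>(f :: complex^'n \<Rightarrow> complex) (x0 :: real^'n) \<rho>0 M2 \<rho>1 (b :: 'n \<Rightarrow> real^'n) i0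
       (h :: real^'n) \<delta>0 \<rho>.
      let P = {z. supn (z - cvec x0) < \<rho>0};
          \<mu>0 = norm (rgrad f x0);
          E0 = freal f x0;
          r = c * \<rho>1;
          g = (\<lambda>y. THE \<xi>::real. \<bar>\<xi>\<bar> < \<rho>1 \<and> freal f (phi b i0 \<xi> y x0) = E0);
          x1 = x0 + h;
          \<mu>1 = norm (rgrad f x1);
          \<mu> = min \<mu>0 \<mu>1
      in
      0 < \<rho>0 \<and> analytic_cn f P \<and>
      (\<forall>x. cvec x \<in> P \<longrightarrow> f (cvec x) \<in> \<real>) \<and>
      0 < M2 \<and> (\<forall>is z. length is = 2 \<and> z \<in> P \<longrightarrow> norm (cpds is f z) \<le> M2) \<and>
      \<mu>0 > 0 \<and>
      (\<forall>i j. b i \<bullet> b j = (if i = j then 1 else 0)) \<and> b i0 = (1 / \<mu>0) *\<^sub>R rgrad f x0 \<and>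
      0 < \<rho>1 \<and> \<rho>1 \<le> c * min \<rho>0 (\<mu>0 / M2) \<and>
      supn h < \<rho>0 / 2 \<and>
      (rgrad f x1 \<bullet> rgrad f x0)\<^sup>2 \<le> (1 - \<delta>0\<^sup>2) * (norm (rgrad f x1))\<^sup>2 * (norm (rgrad f x0))\<^sup>2 \<and>
      0 < \<delta>0 \<and> \<delta>0 \<le> 1 \<and>
      0 < \<rho> \<and> \<rho> \<le> c * min r (\<mu> / M2 * \<delta>0\<^sup>2)
      \<longrightarrow>
      (\<exists>y :: real^'n. y $ i0 = 0 \<and> norm y \<le> \<rho> \<and>
        (let x0' = phi b i0 (g y) y x0 in
          norm (x0' - x0) \<le> 2 * \<rho> \<and>
          \<bar>freal f (x0' + h) - freal f (x0 + h)\<bar> \<ge> 1/2 * \<mu>1 * \<delta>0\<^sup>2 * \<rho>)))"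
proof (intro exI[of _ "1 / (16 * real CARD('n) ^ 2)"] conjI allI impI)
  show "0 < 1 / (16 * real CARD('n) ^ 2)" by simp
next
  fix c :: real and f :: "complex^'n \<Rightarrow> complex" and x0 :: "real^'n" and \<rho>0 M2 \<rho>1 :: real
    and b :: "'n \<Rightarrow> real^'n" and i0 :: 'n and h :: "real^'n" and \<delta>0 \<rho> :: real
  assume c: "0 < c \<and> c \<le> 1 / (16 * real CARD('n) ^ 2)"
  note M = main[where c=c, unfolded Let_def]
  show "let P = {z. supn (z - cvec x0) < \<rho>0};
          \<mu>0 = norm (rgrad f x0);
          E0 = freal f x0;
          r = c * \<rho>1;
          g = (\<lambda>y. THE \<xi>::real. \<bar>\<xi>\<bar> < \<rho>1 \<and> freal f (phi b i0 \<xi> y x0) = E0);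
          x1 = x0 + h;
          \<mu>1 = norm (rgrad f x1);
          \<mu> = min \<mu>0 \<mu>1
      in
      0 < \<rho>0 \<and> analytic_cn f P \<and>
      (\<forall>x. cvec x \<in> P \<longrightarrow> f (cvec x) \<in> \<real>) \<and>
      0 < M2 \<and> (\<forall>is z. length is = 2 \<and> z \<in> P \<longrightarrow> norm (cpds is f z) \<le> M2) \<and>
      \<mu>0 > 0 \<and>
      (\<forall>i j. b i \<bullet> b j = (if i = j then 1 else 0)) \<and> b i0 = (1 / \<mu>0) *\<^sub>R rgrad f x0 \<and>
      0 < \<rho>1 \<and> \<rho>1 \<le> c * min \<rho>0 (\<mu>0 / M2) \<and>
      supn h < \<rho>0 / 2 \<and>
      (rgrad f x1 \<bullet> rgrad f x0)\<^sup>2 \<le> (1 - \<delta>0\<^sup>2) * (norm (rgrad f x1))\<^sup>2 * (norm (rgrad f x0))\<^sup>2 \<and>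
      0 < \<delta>0 \<and> \<delta>0 \<le> 1 \<and>
      0 < \<rho> \<and> \<rho> \<le> c * min r (\<mu> / M2 * \<delta>0\<^sup>2)
      \<longrightarrow>
      (\<exists>y :: real^'n. y $ i0 = 0 \<and> norm y \<le> \<rho> \<and>
        (let x0' = phi b i0 (g y) y x0 in
          norm (x0' - x0) \<le> 2 * \<rho> \<and>
          \<bar>freal f (x0' + h) - freal f (x0 + h)\<bar> \<ge> 1/2 * \<mu>1 * \<delta>0\<^sup>2 * \<rho>))"
    unfolding Let_def
    using c M by blast
qed

end
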